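(* Let $n\ge3$ and let $L^B$ be a blow-up of $L\cong\mathbf{2}^n$ with atoms $q_1,\dots,q_n$. Then $G(L^B)^{**}$ is the disjoint union $$G(L^B)^{**}=H+K_{|[q_1]|}+K_{|[q_2]|}+\cdots+K_{|[q_n]|},$$ where, for each $i$, $K_{|[q_i]|}$ is the complete graph on the vertex set $[q_i]$, and $H$ is the subgraph induced on $V(G(L^B))\setminus\bigcup_{i}[q_i]$, which is connected.
   Context: Blow-up: for $L\cong\mathbf{2}^n$ with atoms $q_1,\dots,q_n$, replace each $a\in L\setminus\{0,1\}$ by a finite chain $C_a$: $a=a^1\lessdot\cdots\lessdot a^{k_a}$ ($k_a\ge1$), keep $0,1$; elements of one chain are ordered along it, and for $u\in C_a,v\in C_b$ with $a\ne b$ ($C_0=\{0\},C_1=\{1\}$), $u\le v$ iff $a<b$ in $L$. $G(L^B)$ is the zero-divisor graph of $L^B$ (vertices: nonzero elements with a nonzero element meeting them in $0$; adjacency: meet $=0$). For $x\in L^B$, $x^\perp=\{z:x\wedge z=0\}$, $[x]=\{y: y^\perp=x^\perp\}$ (so $[q_i]$ is the chain $C_{q_i}$), and classes are ordered by $[a]\le[b]$ iff $b^\perp\subseteq a^\perp$, with $[a]\wedge[b]=[a\wedge b]$. The graph $G(L^B)^{**}$ has vertex set $V(G(L^B))$, distinct $x,y$ adjacent iff either $[x]=[y]$, or $[x]\wedge[y]\ne[0]$ and $[x],[y]$ are incomparable. "$+$" denotes disjoint union of graphs. *)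

theory Defs
  imports Main
begin

text \<open>The Boolean lattice L = 2^n is modelled as the powerset of {..<n}; atom q_i is {i}.
  The blow-up L^B has elements (a, j) with a a subset of {..<n}: for a proper nonempty a,
  j ranges over 1..k a (the chain C_a : a^1 < ... < a^(k a)); for a = {} (bottom) and
  a = {..<n} (top) only j = 1 occurs.\<close>

type_synonym bel = "nat set \<times> nat"

definition blowup_carrier :: "nat \<Rightarrow> (nat set \<Rightarrow> nat) \<Rightarrow> bel set" where
  "blowup_carrier n k = {(a, j). a \<subseteq> {..<n} \<and>
     (if a = {} \<or> a = {..<n} then j = 1 else 1 \<le> j \<and> j \<le> k a)}"

definition blowup_le :: "bel \<Rightarrow> bel \<Rightarrow> bool" where
  "blowup_le x y \<longleftrightarrow> (fst x = fst y \<and> snd x \<le> snd y) \<or> fst x \<subset> fst y"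

definition blowup_zero :: bel where
  "blowup_zero = ({}, 1)"

definition blowup_atom :: "nat \<Rightarrow> bel" where
  "blowup_atom i = ({i}, 1)"

definition pmeet :: "('a \<Rightarrow> 'a \<Rightarrow> bool) \<Rightarrow> 'a set \<Rightarrow> 'a \<Rightarrow> 'a \<Rightarrow> 'a" where
  "pmeet le S x y = (THE m. m \<in> S \<and> le m x \<and> le m y \<and> (\<forall>z\<in>S. le z x \<and> le z y \<longrightarrow> le z m))"

definition bmeet :: "nat \<Rightarrow> (nat set \<Rightarrow> nat) \<Rightarrow> bel \<Rightarrow> bel \<Rightarrow> bel" where
  "bmeet n k x y = pmeet blowup_le (blowup_carrier n k) x y"

definition bperp :: "nat \<Rightarrow> (nat set \<Rightarrow> nat) \<Rightarrow> bel \<Rightarrow> bel set" where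
  "bperp n k x = {z \<in> blowup_carrier n k. bmeet n k x z = blowup_zero}"

definition bclass :: "nat \<Rightarrow> (nat set \<Rightarrow> nat) \<Rightarrow> bel \<Rightarrow> bel set" where
  "bclass n k x = {y \<in> blowup_carrier n k. bperp n k y = bperp n k x}"

definition bclass_le :: "nat \<Rightarrow> (nat set \<Rightarrow> nat) \<Rightarrow> bel \<Rightarrow> bel \<Rightarrow> bool" where
  "bclass_le n k a b \<longleftrightarrow> bperp n k b \<subseteq> bperp n k a"

definition zdg_vertices :: "nat \<Rightarrow> (nat set \<Rightarrow> nat) \<Rightarrow> bel set" where
  "zdg_vertices n k = {x \<in> blowup_carrier n k. x \<noteq> blowup_zero \<and>
     (\<exists>z \<in> blowup_carrier n k. z \<noteq> blowup_zero \<and> bmeet n k x z = blowup_zero)}"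

text \<open>Adjacency of G(L^B)^{**}; [x] \<and> [y] = [x \<and> y].\<close>
definition gss_adj :: "nat \<Rightarrow> (nat set \<Rightarrow> nat) \<Rightarrow> bel \<Rightarrow> bel \<Rightarrow> bool" where
  "gss_adj n k x y \<longleftrightarrow> x \<in> zdg_vertices n k \<and> y \<in> zdg_vertices n k \<and> x \<noteq> y \<and>
     (bclass n k x = bclass n k y \<or>
      (bclass n k (bmeet n k x y) \<noteq> bclass n k blowup_zero \<and>
       \<not> bclass_le n k x y \<and> \<not> bclass_le n k y x))"

definition induced_connected :: "('a \<Rightarrow> 'a \<Rightarrow> bool) \<Rightarrow> 'a set \<Rightarrow> bool" where
  "induced_connected E W \<longleftrightarrow> W \<noteq> {} \<and>
     (\<forall>x\<in>W. \<forall>y\<in>W. (\<lambda>u v. u \<in> W \<and> v \<in> W \<and> E u v)\<^sup>*\<^sup>* x y)"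

end

theory Submission
  imports Defs
begin

definition mm :: "(nat set \<Rightarrow> nat) \<Rightarrow> bel \<Rightarrow> bel \<Rightarrow> bel" where
  "mm k x y = (if fst x = fst y then (fst x, min (snd x) (snd y))
     else if fst x \<subset> fst y then x else if fst y \<subset> fst x then y
     else if fst x \<inter> fst y = {} then ({}, 1) else (fst x \<inter> fst y, k (fst x \<inter> fst y)))"

lemma carr_iff: "(a, j) \<in> blowup_carrier n k \<longleftrightarrow> a \<subseteq> {..<n} \<and>
     (if a = {} \<or> a = {..<n} then j = 1 else 1 \<le> j \<and> j \<le> k a)"
  by (simp add: blowup_carrier_def)

lemma le_antisym: "blowup_le x y \<Longrightarrow> blowup_le y x \<Longrightarrow> x = y"
  by (cases x; cases y) (auto simp: blowup_le_def)

lemma mm_props: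
  assumes kk: "\<forall>a. a \<subseteq> {..<n} \<and> a \<noteq> {} \<and> a \<noteq> {..<n} \<longrightarrow> 1 \<le> k a"
    and x: "x \<in> blowup_carrier n k" and y: "y \<in> blowup_carrier n k"
  shows "mm k x y \<in> blowup_carrier n k \<and> blowup_le (mm k x y) x \<and> blowup_le (mm k x y) y
     \<and> (\<forall>z\<in>blowup_carrier n k. blowup_le z x \<and> blowup_le z y \<longrightarrow> blowup_le z (mm k x y))"
proof -
  obtain a i where xa: "x = (a, i)" by (cases x)
  obtain b j where yb: "y = (b, j)" by (cases y)
  have A: "a \<subseteq> {..<n}" "b \<subseteq> {..<n}" using x y xa yb by (auto simp: carr_iff)
  show ?thesis
  proof (cases "a = b")
    case True
    then show ?thesis using x y xa yb by (auto simp: mm_def blowup_le_def carr_iff split: if_splits)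
  next
    case ne: False
    show ?thesis
    proof (cases "a \<subset> b")
      case True
      then show ?thesis using x y xa yb ne by (auto simp: mm_def blowup_le_def)
    next
      case nab: False
      show ?thesis
      proof (cases "b \<subset> a")
        case True
        then show ?thesis using x y xa yb ne nab by (auto simp: mm_def blowup_le_def)
      next
        case nba: False
        have inc: "\<not> a \<subseteq> b" "\<not> b \<subseteq> a" using ne nab nba by auto
        have lb: "\<And>z. blowup_le z x \<Longrightarrow> blowup_le z y \<Longrightarrow> fst z \<subset> a \<inter> b \<or> fst z = a \<inter> b"
          using inc xa yb by (auto simp: blowup_le_def)
        have nf: "a \<inter> b \<noteq> {..<n}" using inc A by auto
        show ?thesis
        proof (cases "a \<inter> b = {}")
          case True
          have "\<And>z. z \<in> blowup_carrier n k \<Longrightarrow> blowup_le z x \<Longrightarrow> blowup_le z y \<Longrightarrow> blowup_le z ({}, 1)"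
          proof -
            fix z assume z: "z \<in> blowup_carrier n k" "blowup_le z x" "blowup_le z y"
            then have "fst z = {}" using lb True by blast
            then show "blowup_le z ({}, 1)" using z(1) by (cases z) (auto simp: carr_iff blowup_le_def)
          qed
          then show ?thesis using True inc xa yb ne nab nba
            by (auto simp: mm_def blowup_le_def carr_iff)
        next
          case False
          have "a \<inter> b \<subseteq> {..<n}" using A by auto
          then have kab: "1 \<le> k (a \<inter> b)" using kk False nf by blast
          have "\<And>z. z \<in> blowup_carrier n k \<Longrightarrow> blowup_le z x \<Longrightarrow> blowup_le z y \<Longrightarrow> blowup_le z (a \<inter> b, k (a \<inter> b))"
          proof -
            fix z assume z: "z \<in> blowup_carrier n k" "blowup_le z x" "blowup_le z y"
            then have "fst z \<subset> a \<inter> b \<or> fst z = a \<inter> b" using lb by blast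
            moreover obtain c t where zc: "z = (c, t)" by (cases z)
            moreover have "c = a \<inter> b \<Longrightarrow> t \<le> k (a \<inter> b)"
              using z(1) zc False nf by (simp add: carr_iff)
            ultimately show "blowup_le z (a \<inter> b, k (a \<inter> b))"
              by (auto simp: blowup_le_def)
          qed
          then show ?thesis using False inc xa yb ne nab nba kab A nf
            by (auto simp: mm_def blowup_le_def carr_iff)
        qed
      qed
    qed
  qed
qed

lemma bmeet_eq:
  assumes kk: "\<forall>a. a \<subseteq> {..<n} \<and> a \<noteq> {} \<and> a \<noteq> {..<n} \<longrightarrow> 1 \<le> k a"
    and x: "x \<in> blowup_carrier n k" and y: "y \<in> blowup_carrier n k"
  shows "bmeet n k x y = mm k x y"
  unfolding bmeet_def pmeet_def
proof (rule the_equality)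
  show "mm k x y \<in> blowup_carrier n k \<and> blowup_le (mm k x y) x \<and> blowup_le (mm k x y) y
     \<and> (\<forall>z\<in>blowup_carrier n k. blowup_le z x \<and> blowup_le z y \<longrightarrow> blowup_le z (mm k x y))"
    using mm_props[OF kk x y] .
next
  fix m assume m: "m \<in> blowup_carrier n k \<and> blowup_le m x \<and> blowup_le m y \<and>
      (\<forall>z\<in>blowup_carrier n k. blowup_le z x \<and> blowup_le z y \<longrightarrow> blowup_le z m)"
  show "m = mm k x y" using m mm_props[OF kk x y] le_antisym by blast
qed

lemma fst_mm: "fst (mm k x y) = fst x \<inter> fst y"
  by (auto simp: mm_def)


lemma zero_carr: "blowup_zero \<in> blowup_carrier n k"
  by (simp add: blowup_zero_def carr_iff)

lemma single_carr:
  assumes kk: "\<forall>a. a \<subseteq> {..<n} \<and> a \<noteq> {} \<and> a \<noteq> {..<n} \<longrightarrow> 1 \<le> k a"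
    and n: "n \<ge> 3" and i: "i < n"
  shows "({i}, 1) \<in> blowup_carrier n k"
proof -
  have "{i} \<noteq> {..<n}"
  proof
    assume "{i} = {..<n}"
    then have "card {i} = card {..<n}" by simp
    then show False using n by simp
  qed
  moreover have "{i} \<subseteq> {..<n}" using i by auto
  ultimately show ?thesis using kk by (auto simp: carr_iff)
qed

lemma fst_zero: "x \<in> blowup_carrier n k \<Longrightarrow> x = blowup_zero \<longleftrightarrow> fst x = {}"
  by (cases x) (auto simp: carr_iff blowup_zero_def)

lemma carr_sub: "x \<in> blowup_carrier n k \<Longrightarrow> fst x \<subseteq> {..<n}"
  by (cases x) (auto simp: carr_iff)

lemma meet_zero:
  assumes kk: "\<forall>a. a \<subseteq> {..<n} \<and> a \<noteq> {} \<and> a \<noteq> {..<n} \<longrightarrow> 1 \<le> k a"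
    and x: "x \<in> blowup_carrier n k" and y: "y \<in> blowup_carrier n k"
  shows "bmeet n k x y = blowup_zero \<longleftrightarrow> fst x \<inter> fst y = {}"
  using bmeet_eq[OF kk x y] mm_props[OF kk x y] fst_zero[of "mm k x y" n k] fst_mm[of k x y]
  by simp

lemma perp_eq:
  assumes kk: "\<forall>a. a \<subseteq> {..<n} \<and> a \<noteq> {} \<and> a \<noteq> {..<n} \<longrightarrow> 1 \<le> k a"
    and x: "x \<in> blowup_carrier n k"
  shows "bperp n k x = {z \<in> blowup_carrier n k. fst x \<inter> fst z = {}}"
  using meet_zero[OF kk x] by (auto simp: bperp_def)

lemma perp_sub:
  assumes kk: "\<forall>a. a \<subseteq> {..<n} \<and> a \<noteq> {} \<and> a \<noteq> {..<n} \<longrightarrow> 1 \<le> k a"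
    and n: "n \<ge> 3"
    and x: "x \<in> blowup_carrier n k" and y: "y \<in> blowup_carrier n k"
  shows "bperp n k y \<subseteq> bperp n k x \<longleftrightarrow> fst x \<subseteq> fst y"
proof
  assume "fst x \<subseteq> fst y" then show "bperp n k y \<subseteq> bperp n k x"
    using perp_eq[OF kk x] perp_eq[OF kk y] by auto
next
  assume h: "bperp n k y \<subseteq> bperp n k x"
  show "fst x \<subseteq> fst y"
  proof
    fix i assume i: "i \<in> fst x"
    then have "i < n" using carr_sub[OF x] by auto
    then have c: "({i}, 1) \<in> blowup_carrier n k" using single_carr[OF kk n] by blast
    show "i \<in> fst y"
    proof (rule ccontr)
      assume "i \<notin> fst y"
      then have "({i}, 1) \<in> bperp n k y" using c perp_eq[OF kk y] by auto
      then have "({i}, 1) \<in> bperp n k x" using h by auto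
      then show False using i perp_eq[OF kk x] by auto
    qed
  qed
qed

lemma class_eq:
  assumes kk: "\<forall>a. a \<subseteq> {..<n} \<and> a \<noteq> {} \<and> a \<noteq> {..<n} \<longrightarrow> 1 \<le> k a"
    and n: "n \<ge> 3"
    and x: "x \<in> blowup_carrier n k"
  shows "bclass n k x = {y \<in> blowup_carrier n k. fst y = fst x}"
proof -
  have "\<And>y. y \<in> blowup_carrier n k \<Longrightarrow> bperp n k y = bperp n k x \<longleftrightarrow> fst y = fst x"
    using perp_sub[OF kk n x] perp_sub[OF kk n _ x] by (metis subset_antisym order_refl)
  then show ?thesis by (auto simp: bclass_def)
qed

lemma class_eq_iff:
  assumes kk: "\<forall>a. a \<subseteq> {..<n} \<and> a \<noteq> {} \<and> a \<noteq> {..<n} \<longrightarrow> 1 \<le> k a"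
    and n: "n \<ge> 3"
    and x: "x \<in> blowup_carrier n k" and y: "y \<in> blowup_carrier n k"
  shows "bclass n k x = bclass n k y \<longleftrightarrow> fst x = fst y"
  using class_eq[OF kk n x] class_eq[OF kk n y] x y by auto

lemma verts_eq:
  assumes kk: "\<forall>a. a \<subseteq> {..<n} \<and> a \<noteq> {} \<and> a \<noteq> {..<n} \<longrightarrow> 1 \<le> k a"
    and n: "n \<ge> 3"
  shows "zdg_vertices n k = {x \<in> blowup_carrier n k. fst x \<noteq> {} \<and> fst x \<noteq> {..<n}}"
proof -
  have "\<And>x. x \<in> blowup_carrier n k \<Longrightarrow>
    (x \<noteq> blowup_zero \<and> (\<exists>z \<in> blowup_carrier n k. z \<noteq> blowup_zero \<and> bmeet n k x z = blowup_zero))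
    \<longleftrightarrow> fst x \<noteq> {} \<and> fst x \<noteq> {..<n}"
  proof -
    fix x assume x: "x \<in> blowup_carrier n k"
    show "?thesis x"
    proof
      assume h: "x \<noteq> blowup_zero \<and> (\<exists>z \<in> blowup_carrier n k. z \<noteq> blowup_zero \<and> bmeet n k x z = blowup_zero)"
      then obtain z where z: "z \<in> blowup_carrier n k" "z \<noteq> blowup_zero" "fst x \<inter> fst z = {}"
        using meet_zero[OF kk x] by blast
      have "fst z \<noteq> {}" using z fst_zero by blast
      moreover have "fst z \<subseteq> {..<n}" using carr_sub[OF z(1)] .
      ultimately have "fst x \<noteq> {..<n}" using z(3) by auto
      then show "fst x \<noteq> {} \<and> fst x \<noteq> {..<n}" using h fst_zero[OF x] by auto
    next
      assume h: "fst x \<noteq> {} \<and> fst x \<noteq> {..<n}"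
      then obtain i where i: "i < n" "i \<notin> fst x" using carr_sub[OF x] by auto
      have c: "({i}, 1) \<in> blowup_carrier n k" using single_carr[OF kk n i(1)] .
      have "({i}, 1::nat) \<noteq> blowup_zero" by (simp add: blowup_zero_def)
      moreover have "bmeet n k x ({i}, 1) = blowup_zero" using meet_zero[OF kk x c] i by auto
      ultimately show "x \<noteq> blowup_zero \<and> (\<exists>z \<in> blowup_carrier n k. z \<noteq> blowup_zero \<and> bmeet n k x z = blowup_zero)"
        using c h fst_zero[OF x] by blast
    qed
  qed
  then show ?thesis unfolding zdg_vertices_def by blast
qed

lemma adj_eq:
  assumes kk: "\<forall>a. a \<subseteq> {..<n} \<and> a \<noteq> {} \<and> a \<noteq> {..<n} \<longrightarrow> 1 \<le> k a"
    and n: "n \<ge> 3"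
  shows "gss_adj n k x y \<longleftrightarrow> x \<in> zdg_vertices n k \<and> y \<in> zdg_vertices n k \<and> x \<noteq> y \<and>
     (fst x = fst y \<or> (fst x \<inter> fst y \<noteq> {} \<and> \<not> fst x \<subseteq> fst y \<and> \<not> fst y \<subseteq> fst x))"
proof (cases "x \<in> zdg_vertices n k \<and> y \<in> zdg_vertices n k")
  case True
  then have x: "x \<in> blowup_carrier n k" and y: "y \<in> blowup_carrier n k"
    by (auto simp: zdg_vertices_def)
  have m: "bmeet n k x y \<in> blowup_carrier n k" "fst (bmeet n k x y) = fst x \<inter> fst y"
    using bmeet_eq[OF kk x y] mm_props[OF kk x y] fst_mm by auto
  have "bclass n k (bmeet n k x y) = bclass n k blowup_zero \<longleftrightarrow> fst x \<inter> fst y = {}"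
    using class_eq_iff[OF kk n m(1) zero_carr] m(2) by (simp add: blowup_zero_def)
  then show ?thesis unfolding gss_adj_def bclass_le_def
    using class_eq_iff[OF kk n x y] perp_sub[OF kk n x y] perp_sub[OF kk n y x] True by auto
next
  case False
  then show ?thesis by (auto simp: gss_adj_def)
qed


lemma sym_rtranclp: assumes s: "\<And>u v. R u v \<Longrightarrow> R v u" and "R\<^sup>*\<^sup>* a b" shows "R\<^sup>*\<^sup>* b a"
  using assms(2)
proof (induction rule: rtranclp_induct)
  case base then show ?case by simp
next
  case (step y z)
  then show ?case using s by (meson converse_rtranclp_into_rtranclp)
qed

context
  fixes n :: nat and k :: "nat set \<Rightarrow> nat"
  assumes kk: "\<forall>a. a \<subseteq> {..<n} \<and> a \<noteq> {} \<and> a \<noteq> {..<n} \<longrightarrow> 1 \<le> k a"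
    and n3: "n \<ge> 3"
begin

definition "HS = {x \<in> blowup_carrier n k. fst x \<noteq> {} \<and> fst x \<noteq> {..<n} \<and> (\<forall>i<n. fst x \<noteq> {i})}"

definition "RR = (\<lambda>u v. u \<in> HS \<and> v \<in> HS \<and> gss_adj n k u v)"

lemma two_HS:
  assumes "p \<noteq> c" "p < n" "c < n"
  shows "({p, c}, 1) \<in> HS"
proof -
  have "card {p, c} = 2" using assms by simp
  have "{p, c} \<noteq> {..<n}"
  proof
    assume "{p, c} = {..<n}"
    then have "card {p, c} = n" by simp
    then show False using \<open>card {p, c} = 2\<close> n3 by simp
  qed
  moreover have "{p,c} \<subseteq> {..<n}" using assms by auto
  moreover have "\<forall>i. {p,c} \<noteq> {i}" using assms by auto
  ultimately show ?thesis using kk by (auto simp: HS_def carr_iff)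
qed

lemma HS_V: "HS \<subseteq> zdg_vertices n k"
  using verts_eq[OF kk n3] by (auto simp: HS_def)

lemma RR_iff: "u \<in> HS \<Longrightarrow> v \<in> HS \<Longrightarrow> fst u \<noteq> fst v \<Longrightarrow> fst u \<inter> fst v \<noteq> {} \<Longrightarrow>
   \<not> fst u \<subseteq> fst v \<Longrightarrow> \<not> fst v \<subseteq> fst u \<Longrightarrow> RR u v"
  unfolding RR_def using adj_eq[OF kk n3] HS_V by auto

lemma two_two:
  assumes "p \<noteq> c" "p < n" "c < n" "q \<noteq> d" "q < n" "d < n" "{p,c} \<noteq> {q,d}"
    "{p,c} \<inter> {q,d} \<noteq> {}"
  shows "RR ({p,c},1) ({q,d},1)"
proof -
  have "\<not> {p,c} \<subseteq> {q,d}" using assms by auto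
  moreover have "\<not> {q,d} \<subseteq> {p,c}" using assms by auto
  ultimately show ?thesis using RR_iff two_HS assms by simp
qed

lemma two_hub:
  assumes "p \<noteq> c" "p < n" "c < n"
  shows "RR\<^sup>*\<^sup>* ({p,c},1) ({0,1},1)"
proof -
  have n01: "0 < n" "1 < n" using n3 by auto
  define S where "S = {p,c}"
  consider "S = {0,1}" | "S \<noteq> {0,1}" "S \<inter> {0,1} \<noteq> {}" | "S \<inter> {0,1} = {}" by argo
  then show ?thesis unfolding S_def
  proof cases
    case 1 then show ?thesis by simp
  next
    case 2
    have "RR ({p,c},1) ({0,1},1)"
      by (rule two_two) (use assms 2 n01 in auto)
    then show ?thesis by (rule r_into_rtranclp)
  next
    case 3
    have d: "p \<noteq> 0" "c \<noteq> 0" "p \<noteq> 1" "c \<noteq> 1" using 3 by auto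
    have e1: "{p,c} \<noteq> {c,0}" using d by (simp add: doubleton_eq_iff)
    have e2: "{c,0} \<noteq> {0::nat,1}" using d by (simp add: doubleton_eq_iff)
    have a: "RR ({p,c},1) ({c,0},1)"
      by (rule two_two) (use assms n01 d e1 in auto)
    have b: "RR ({c,0},1) ({0,1},1)"
      by (rule two_two) (use assms n01 d e2 in auto)
    show ?thesis using a b by (meson rtranclp.rtrancl_into_rtrancl r_into_rtranclp)
  qed
qed

lemma to_hub:
  assumes x: "x \<in> HS"
  shows "RR\<^sup>*\<^sup>* x ({0,1},1)"
proof -
  have xc: "x \<in> blowup_carrier n k" and ne: "fst x \<noteq> {}" "fst x \<noteq> {..<n}" and ns: "\<forall>i<n. fst x \<noteq> {i}"
    using x by (auto simp: HS_def)
  have sub: "fst x \<subseteq> {..<n}" using carr_sub[OF xc] .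
  obtain p where p: "p \<in> fst x" using ne by auto
  obtain c where c: "c < n" "c \<notin> fst x" using ne sub by auto
  have pn: "p < n" using p sub by auto
  have pc: "p \<noteq> c" using p c by auto
  have "\<not> fst x \<subseteq> {p, c}"
  proof
    assume "fst x \<subseteq> {p, c}"
    then have "fst x = {p}" using p c by auto
    then show False using ns pn by auto
  qed
  then have "RR x ({p,c},1)" using RR_iff[OF x two_HS[OF pc pn c(1)]] p c by auto
  then show ?thesis using two_hub[OF pc pn c(1)] by (meson converse_rtranclp_into_rtranclp)
qed

lemma RR_sym: assumes "RR u v" shows "RR v u"
proof -
  have "u \<in> HS" "v \<in> HS" "gss_adj n k u v" using assms by (auto simp: RR_def)
  then have h: "u \<in> zdg_vertices n k" "v \<in> zdg_vertices n k" "u \<noteq> v"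
    "fst u = fst v \<or> (fst u \<inter> fst v \<noteq> {} \<and> \<not> fst u \<subseteq> fst v \<and> \<not> fst v \<subseteq> fst u)"
    using adj_eq[OF kk n3] by auto
  have "fst v = fst u \<or> (fst v \<inter> fst u \<noteq> {} \<and> \<not> fst v \<subseteq> fst u \<and> \<not> fst u \<subseteq> fst v)"
    using h(4) by (simp only: Int_commute eq_commute) argo
  then have "gss_adj n k v u" using h adj_eq[OF kk n3] by auto
  then show ?thesis using \<open>u \<in> HS\<close> \<open>v \<in> HS\<close> by (simp add: RR_def)
qed

lemma HS_conn: assumes "x \<in> HS" "y \<in> HS" shows "RR\<^sup>*\<^sup>* x y"
proof -
  have a: "RR\<^sup>*\<^sup>* x ({0,1},1)" using to_hub[OF assms(1)] .
  have "RR\<^sup>*\<^sup>* y ({0,1},1)" using to_hub[OF assms(2)] .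
  then have b: "RR\<^sup>*\<^sup>* ({0,1},1) y" using sym_rtranclp[of RR] RR_sym by blast
  show ?thesis using a b by (rule rtranclp_trans)
qed

end

theorem mainTheorem7:
  fixes n :: nat and k :: "nat set \<Rightarrow> nat"
  assumes "n \<ge> 3"
    and "\<forall>a. a \<subseteq> {..<n} \<and> a \<noteq> {} \<and> a \<noteq> {..<n} \<longrightarrow> 1 \<le> k a"
  defines "V \<equiv> zdg_vertices n k"
    and "Q \<equiv> (\<lambda>i. bclass n k (blowup_atom i))"
    and "H \<equiv> zdg_vertices n k - (\<Union>i<n. bclass n k (blowup_atom i))"
  shows "(\<forall>i<n. Q i \<subseteq> V)
    \<and> (\<forall>i<n. \<forall>j<n. i \<noteq> j \<longrightarrow> Q i \<inter> Q j = {})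
    \<and> (\<forall>i<n. \<forall>x\<in>Q i. \<forall>y\<in>Q i. x \<noteq> y \<longrightarrow> gss_adj n k x y)
    \<and> (\<forall>i<n. \<forall>x\<in>Q i. \<forall>y\<in>V - Q i. \<not> gss_adj n k x y \<and> \<not> gss_adj n k y x)
    \<and> induced_connected (gss_adj n k) H"
proof -
  note kk = assms(2) and n3 = assms(1)
  have Qe: "Q i = {y \<in> blowup_carrier n k. fst y = {i}}" if "i < n" for i
    using class_eq[OF kk n3 single_carr[OF kk n3 that]] unfolding Q_def blowup_atom_def by simp
  have Ve: "V = {x \<in> blowup_carrier n k. fst x \<noteq> {} \<and> fst x \<noteq> {..<n}}"
    unfolding V_def using verts_eq[OF kk n3] .
  have nsing: "{i} \<noteq> {..<n}" for i
  proof
    assume "{i} = {..<n}"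
    then have "card {i} = card {..<n}" by simp
    then show False using n3 by simp
  qed
  have adj: "\<And>x y. gss_adj n k x y \<longleftrightarrow> x \<in> V \<and> y \<in> V \<and> x \<noteq> y \<and>
     (fst x = fst y \<or> (fst x \<inter> fst y \<noteq> {} \<and> \<not> fst x \<subseteq> fst y \<and> \<not> fst y \<subseteq> fst x))"
    unfolding V_def by (rule adj_eq[OF kk n3])
  have p1: "\<forall>i<n. Q i \<subseteq> V" using Qe Ve nsing by auto
  have p2: "\<forall>i<n. \<forall>j<n. i \<noteq> j \<longrightarrow> Q i \<inter> Q j = {}" using Qe by auto
  have p3: "\<forall>i<n. \<forall>x\<in>Q i. \<forall>y\<in>Q i. x \<noteq> y \<longrightarrow> gss_adj n k x y"
  proof (intro allI impI ballI)
    fix i x y assume i: "i < n" and x: "x \<in> Q i" and y: "y \<in> Q i" and xy: "x \<noteq> y"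
    have "x \<in> V" "y \<in> V" using p1 i x y by auto
    moreover have "fst x = fst y" using x y Qe[OF i] by simp
    ultimately show "gss_adj n k x y" unfolding adj using xy by simp
  qed
  have p4: "\<forall>i<n. \<forall>x\<in>Q i. \<forall>y\<in>V - Q i. \<not> gss_adj n k x y \<and> \<not> gss_adj n k y x"
  proof (intro allI impI ballI)
    fix i x y assume i: "i < n" and x: "x \<in> Q i" and y: "y \<in> V - Q i"
    have fx: "fst x = {i}" using x Qe i by auto
    have "fst y \<noteq> {i}" using y Qe i Ve by auto
    then have "\<not> (fst x = fst y \<or> (fst x \<inter> fst y \<noteq> {} \<and> \<not> fst x \<subseteq> fst y \<and> \<not> fst y \<subseteq> fst x))"
      using fx by auto
    then show "\<not> gss_adj n k x y \<and> \<not> gss_adj n k y x" unfolding adj by blast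
  qed
  have He: "H = HS n k"
  proof -
    have "(\<Union>i<n. bclass n k (blowup_atom i)) = (\<Union>i<n. Q i)" unfolding Q_def by simp
    also have "\<dots> = {y \<in> blowup_carrier n k. \<exists>i<n. fst y = {i}}" using Qe by auto
    finally show ?thesis unfolding H_def HS_def[OF kk n3] using verts_eq[OF kk n3] by auto
  qed
  have "({0,1},1) \<in> HS n k" using two_HS[OF kk n3, of 0 1] n3 by auto
  then have p5: "induced_connected (gss_adj n k) H"
    unfolding induced_connected_def He using HS_conn[OF kk n3] unfolding RR_def[OF kk n3]
    by blast
  show ?thesis by (rule conjI[OF p1 conjI[OF p2 conjI[OF p3 conjI[OF p4 p5]]]])
qed

end
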